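(* For each $n\ge0$, the map $\psi:\mathcal{D}_n\to\mathfrak{S}_n(321)$ is a bijection satisfying $(\mathrm{hill}(D),\mathrm{seg}(D),\mathrm{lseg}(D))=(\mathrm{fix}(\psi(D)),\mathrm{des}(\psi(D)),\mathrm{ldes}(\psi(D))+1)$ for every $D\in\mathcal{D}_n$.
   Context: A Dyck path of semilength $n$ is a lattice path from $(0,0)$ to $(n,n)$ with east steps $(1,0)$ and north steps $(0,1)$ never passing above the line $y=x$; it is encoded as $D=d_1d_2\cdots d_n$ where $d_i$ is the number of north steps before the $i$-th east step. $\mathcal{D}_n$ is the set of Dyck paths of semilength $n$. Statistics: $\mathrm{hill}(D)$ is the number of east steps that touch the diagonal $y=x$ and are immediately followed by a north step; a segment is a maximal string of at least two consecutive east steps of the same height, and $\mathrm{seg}(D)$ is the number of segments; $\mathrm{lseg}(D)=i$ if the $i$-th east step is the last step of the leftmost segment of $D$, while $\mathrm{lseg}(D)=n+1$ if $D$ has no segment (i.e. $D=01\cdots(n-1)$; in particular the empty path has $\mathrm{lseg}=1$). $\mathfrak{S}_n(321)$ is the set of permutations of $[n]$ with no $i<j<l$ and $\pi_i>\pi_j>\pi_l$. For $\pi\in\mathfrak{S}_n$: $\mathrm{fix}(\pi)=|\{i:\pi_i=i\}|$, $\mathrm{des}(\pi)=|\{i:\pi_i>\pi_{i+1}\}|$, $\mathrm{ldes}(\pi)=\min\{i:\pi_i>\pi_{i+1}\text{ or }i=n\}$ (with $\mathrm{ldes}=0$ for the empty permutation). The map $\psi$ (Krattenthaler's bijection): for $D=d_1\cdots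 d_n$, $\psi(D)=\pi_1\cdots\pi_n$ where $\pi_i=d_i+1$ if $i=n$ or $d_i\ne d_{i+1}$; otherwise, if $i$ is the $j$-th smallest element of $\{l\in[n-1]:d_l=d_{l+1}\}$, then $\pi_i$ is the $j$-th smallest element of $[n]\setminus\{d_1+1,\dots,d_n+1\}$. *)

theory Defs
  imports Main "HOL-Combinatorics.Multiset_Permutations"
begin

text \<open>Positions are 1-based as in the paper: x ent i = x ! (i - 1).\<close>
definition ent :: "nat list \<Rightarrow> nat \<Rightarrow> nat" where
  "ent xs i = xs ! (i - 1)"

text \<open>Dyck paths of semilength n, encoded as D = d_1...d_n (d_i = number of north
steps before the i-th east step). Staying weakly below y = x means d_i \<le> i - 1;
the sequence is weakly increasing.\<close>
definition dyck :: "nat \<Rightarrow> nat list set" where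
  "dyck n = {d. length d = n \<and> (\<forall>i. 1 \<le> i \<and> i < n \<longrightarrow> ent d i \<le> ent d (Suc i))
                \<and> (\<forall>i\<in>{1..n}. ent d i \<le> i - 1)}"

text \<open>hill: east step i starts on the diagonal (point (i-1,i-1)) and the next step is north
(for i < n: d_(i+1) > d_i; for i = n: there remain north steps, d_n < n).\<close>
definition hill :: "nat list \<Rightarrow> nat" where
  "hill d = (let n = length d in card {i\<in>{1..n}. ent d i = i - 1 \<and>
      ((i < n \<and> ent d i < ent d (Suc i)) \<or> (i = n \<and> ent d i < n))})"

definition seg :: "nat list \<Rightarrow> nat" where
  "seg d = (let n = length d in card {i\<in>{1..<n}. ent d i = ent d (Suc i) \<and>
      (i = 1 \<or> ent d (i - 1) \<noteq> ent d i)})"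

text \<open>lseg: position of the last east step of the leftmost segment, n+1 if none.\<close>
definition lseg :: "nat list \<Rightarrow> nat" where
  "lseg d = (let n = length d;
                 E = {i\<in>{2..n}. ent d (i - 1) = ent d i \<and> (i = n \<or> ent d i \<noteq> ent d (Suc i))}
             in if E = {} then n + 1 else Min E)"

definition av321 :: "nat \<Rightarrow> nat list set" where
  "av321 n = {p. p \<in> permutations_of_set {1..n} \<and>
      \<not> (\<exists>i j l. 1 \<le> i \<and> i < j \<and> j < l \<and> l \<le> n \<and> ent p i > ent p j \<and> ent p j > ent p l)}"

definition fixp :: "nat list \<Rightarrow> nat" where
  "fixp p = card {i\<in>{1..length p}. ent p i = i}"

definition des :: "nat list \<Rightarrow> nat" where
  "des p = card {i\<in>{1..<length p}. ent p i > ent p (Suc i)}"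

definition ldes :: "nat list \<Rightarrow> nat" where
  "ldes p = (if p = [] then 0 else
     (LEAST i. 1 \<le> i \<and> ((i < length p \<and> ent p i > ent p (Suc i)) \<or> i = length p)))"

definition psi :: "nat list \<Rightarrow> nat list" where
  "psi d = (let n = length d;
                L = {l\<in>{1..<n}. ent d l = ent d (Suc l)};
                C = {1..n} - {ent d i + 1 | i. i \<in> {1..n}}
            in map (\<lambda>i. if i = n \<or> ent d i \<noteq> ent d (Suc i) then ent d i + 1
                        else sorted_list_of_set C ! (card {l\<in>L. l \<le> i} - 1)) [1..<n+1])"

end

theory Submission
  imports Defs
begin

lemma slos_card_less:
  fixes A :: "nat set"
  assumes "finite A" "j < card A"
  shows "card {a\<in>A. a < sorted_list_of_set A ! j} = j"
proof -
  let ?xs = "sorted_list_of_set A"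
  have srt: "sorted_wrt (<) ?xs" by (simp add: strict_sorted_list_of_set)
  have len: "length ?xs = card A" by simp
  have st: "set ?xs = A" using assms by simp
  have dist: "distinct ?xs" by simp
  have "{a\<in>A. a < ?xs ! j} = set (take j ?xs)"
  proof
    show "{a\<in>A. a < ?xs ! j} \<subseteq> set (take j ?xs)"
    proof
      fix a assume a: "a \<in> {a\<in>A. a < ?xs ! j}"
      then obtain m where m: "m < length ?xs" "?xs ! m = a" using st by (metis (no_types, lifting) in_set_conv_nth mem_Collect_eq)
      have "m < j"
      proof (rule ccontr)
        assume "\<not> m < j"
        then have "j \<le> m" by simp
        then have "?xs ! j \<le> ?xs ! m" using srt m(1)
          by (metis le_less sorted_wrt_nth_less order.refl)
        then show False using a m by simp
      qed
      then show "a \<in> set (take j ?xs)" using m by (metis in_set_conv_nth length_take min_less_iff_conj nth_take)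
    qed
  next
    show "set (take j ?xs) \<subseteq> {a\<in>A. a < ?xs ! j}"
    proof
      fix a assume "a \<in> set (take j ?xs)"
      then obtain m where m0: "m < length (take j ?xs)" "take j ?xs ! m = a"
        by (metis in_set_conv_nth)
      then have m: "m < j" "?xs ! m = a" by auto
      have "a < ?xs ! j" using sorted_wrt_nth_less[OF srt m(1)] assms(2) len m(2) by simp
      moreover have "m < length ?xs" using m(1) assms(2) len by simp
      then have "a \<in> A" using m st nth_mem by blast
      ultimately show "a \<in> {a\<in>A. a < ?xs ! j}" by simp
    qed
  qed
  then show ?thesis using dist assms len by (simp add: distinct_card)
qed

lemma slos_nth_card:
  fixes A :: "nat set"
  assumes "finite A" "x \<in> A"
  shows "sorted_list_of_set A ! card {a\<in>A. a < x} = x"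
proof -
  let ?xs = "sorted_list_of_set A"
  obtain j where j: "j < length ?xs" "?xs ! j = x" using assms by (metis in_set_conv_nth set_sorted_list_of_set)
  have "card {a\<in>A. a < x} = j" using slos_card_less[of A j] assms j by simp
  then show ?thesis using j by simp
qed

lemma slos_mono_image:
  fixes S :: "nat set" and f :: "nat \<Rightarrow> nat"
  assumes "finite S" "\<And>x y. x \<in> S \<Longrightarrow> y \<in> S \<Longrightarrow> x < y \<Longrightarrow> f x < f y" "i \<in> S"
  shows "sorted_list_of_set (f ` S) ! (card {l\<in>S. l \<le> i} - 1) = f i"
proof -
  have inj: "inj_on f S" using assms(2) by (metis linorder_inj_onI' order_less_irrefl)
  have "{y\<in>f ` S. y < f i} = f ` {l\<in>S. l < i}"
  proof (rule set_eqI, rule iffI)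
    fix y assume "y \<in> {y\<in>f ` S. y < f i}"
    then obtain l where l: "l \<in> S" "y = f l" "f l < f i" by auto
    have "l < i" using assms(2)[of i l] l assms(3) by (metis not_less_iff_gr_or_eq order_less_asym')
    then show "y \<in> f ` {l\<in>S. l < i}" using l by auto
  next
    fix y assume "y \<in> f ` {l\<in>S. l < i}"
    then show "y \<in> {y\<in>f ` S. y < f i}" using assms by auto
  qed
  then have "card {y\<in>f ` S. y < f i} = card {l\<in>S. l < i}"
    using inj by (metis (no_types, lifting) card_image inj_on_subset mem_Collect_eq subsetI)
  moreover have "card {l\<in>S. l \<le> i} = Suc (card {l\<in>S. l < i})"
  proof -
    have "{l\<in>S. l \<le> i} = insert i {l\<in>S. l < i}" using assms(3) by auto
    then show ?thesis using assms(1) by simp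
  qed
  ultimately show ?thesis using slos_nth_card[of "f ` S" "f i"] assms by simp
qed

lemma runs_count:
  fixes S :: "nat set"
  assumes "finite S" "0 \<notin> S"
  shows "card {i\<in>S. Suc i \<notin> S} = card {i\<in>S. i - 1 \<notin> S}"
proof -
  have a: "card S = card {i\<in>S. Suc i \<notin> S} + card {i\<in>S. Suc i \<in> S}"
  proof -
    have "S = {i\<in>S. Suc i \<notin> S} \<union> {i\<in>S. Suc i \<in> S}" by blast
    moreover have "{i\<in>S. Suc i \<notin> S} \<inter> {i\<in>S. Suc i \<in> S} = {}" by blast
    ultimately show ?thesis using assms(1) card_Un_disjoint
      by (metis (no_types, lifting) finite_Un)
  qed
  have b: "card S = card {i\<in>S. i - 1 \<notin> S} + card {i\<in>S. i - 1 \<in> S}"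
  proof -
    have "S = {i\<in>S. i - 1 \<notin> S} \<union> {i\<in>S. i - 1 \<in> S}" by blast
    moreover have "{i\<in>S. i - 1 \<notin> S} \<inter> {i\<in>S. i - 1 \<in> S} = {}" by blast
    ultimately show ?thesis using assms(1) card_Un_disjoint
      by (metis (no_types, lifting) finite_Un)
  qed
  have "{i\<in>S. i - 1 \<in> S} = Suc ` {i\<in>S. Suc i \<in> S}"
  proof (rule set_eqI, rule iffI)
    fix x assume x: "x \<in> {i\<in>S. i - 1 \<in> S}"
    then have "x \<noteq> 0" using assms(2) by (metis (mono_tags) mem_Collect_eq)
    then have "x = Suc (x - 1)" by simp
    then show "x \<in> Suc ` {i\<in>S. Suc i \<in> S}" using x by (metis (no_types, lifting) image_iff mem_Collect_eq)
  qed auto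
  then have "card {i\<in>S. i - 1 \<in> S} = card {i\<in>S. Suc i \<in> S}" by (simp add: card_image)
  then show ?thesis using a b by simp
qed


definition Cset :: "nat list \<Rightarrow> nat set" where
  "Cset D = {1..length D} - {ent D i + 1 | i. i \<in> {1..length D}}"
definition Lset :: "nat list \<Rightarrow> nat set" where
  "Lset D = {l\<in>{1..<length D}. ent D l = ent D (Suc l)}"

lemma length_psi[simp]: "length (psi D) = length D"
  by (simp add: psi_def Let_def del: upt_Suc)

lemma ent_psi:
  assumes "1 \<le> i" "i \<le> length D"
  shows "ent (psi D) i = (if i = length D \<or> ent D i \<noteq> ent D (Suc i) then ent D i + 1
           else sorted_list_of_set (Cset D) ! (card {l\<in>Lset D. l \<le> i} - 1))"
proof -
  have "i - 1 < length [1..<length D + 1]" using assms by simp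
  moreover have "[1..<length D + 1] ! (i - 1) = 1 + (i - 1)" by (rule nth_upt) (use assms in simp)
  then have "[1..<length D + 1] ! (i - 1) = i" using assms by simp
  ultimately show ?thesis using assms
    unfolding psi_def ent_def[of "map _ _"] Let_def Cset_def Lset_def
    by (simp del: upt_Suc)
qed

locale dpath =
  fixes n :: nat and D :: "nat list"
  assumes D: "D \<in> dyck n"
begin

abbreviation "d \<equiv> ent D"
abbreviation "\<pi> \<equiv> ent (psi D)"

lemma len: "length D = n" using D by (simp add: dyck_def)

lemma step: "1 \<le> i \<Longrightarrow> i < n \<Longrightarrow> d i \<le> d (Suc i)"
  using D by (simp add: dyck_def)

lemma bound: "1 \<le> i \<Longrightarrow> i \<le> n \<Longrightarrow> d i \<le> i - 1"
  using D by (simp add: dyck_def)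

lemma mono: assumes "1 \<le> i" "i \<le> j" "j \<le> n" shows "d i \<le> d j"
  using assms(2,3)
proof (induction j rule: dec_induct)
  case base then show ?case by simp
next
  case (step m)
  then have "d m \<le> d (Suc m)" using assms(1) dpath.step dpath_axioms by simp
  then show ?case using step by simp
qed

definition Rp :: "nat \<Rightarrow> bool" where "Rp k \<longleftrightarrow> k = n \<or> d k \<noteq> d (Suc k)"
definition RS :: "nat set" where "RS = {k\<in>{1..n}. Rp k}"
abbreviation "L \<equiv> Lset D"
abbreviation "C \<equiv> Cset D"
definition V :: "nat set" where "V = {d i + 1 | i. i \<in> {1..n}}"

lemma L_def': "L = {l\<in>{1..<n}. d l = d (Suc l)}" by (simp add: Lset_def len)
lemma C_def': "C = {1..n} - V" by (simp add: Cset_def V_def len)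

lemma L_iff: "k \<in> {1..n} \<Longrightarrow> k \<in> L \<longleftrightarrow> \<not> Rp k"
  by (auto simp: L_def' Rp_def)

lemma Rp_lt: assumes "1 \<le> k" "k < n" "Rp k" shows "d k < d (Suc k)"
  using assms step[of k] by (simp add: Rp_def)

lemma Rlt: assumes "1 \<le> k" "k < k'" "k' \<le> n" "Rp k" shows "d k < d k'"
proof -
  have "d k < d (Suc k)" using Rp_lt assms by simp
  also have "d (Suc k) \<le> d k'" using mono[of "Suc k" k'] assms by simp
  finally show ?thesis .
qed

definition nr :: "nat \<Rightarrow> nat" where "nr i = (LEAST k. i \<le> k \<and> k \<le> n \<and> Rp k)"

lemma nr_props:
  assumes "i \<le> n"
  shows "i \<le> nr i" "nr i \<le> n" "Rp (nr i)" "\<And>m. i \<le> m \<Longrightarrow> m < nr i \<Longrightarrow> \<not> Rp m"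
proof -
  have ex: "i \<le> n \<and> n \<le> n \<and> Rp n" using assms by (simp add: Rp_def)
  have "i \<le> nr i \<and> nr i \<le> n \<and> Rp (nr i)" unfolding nr_def by (rule LeastI[of _ n], rule ex)
  then show "i \<le> nr i" "nr i \<le> n" "Rp (nr i)" by auto
  fix m assume m: "i \<le> m" "m < nr i"
  show "\<not> Rp m"
  proof
    assume "Rp m"
    then have "nr i \<le> m" unfolding nr_def using m \<open>nr i \<le> n\<close>
      by (intro Least_le) simp
    then show False using m by simp
  qed
qed

lemma nr_eq: assumes "1 \<le> i" "i \<le> n" shows "d i = d (nr i)"
proof -
  have "\<And>m. i \<le> m \<Longrightarrow> m \<le> nr i \<Longrightarrow> d i = d m"
  proof -
    fix m assume "i \<le> m" "m \<le> nr i"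
    then show "d i = d m"
    proof (induction m rule: dec_induct)
      case base then show ?case by simp
    next
      case (step m)
      then have "\<not> Rp m" using nr_props(4)[OF assms(2)] by simp
      then have "d m = d (Suc m)" by (simp add: Rp_def)
      then show ?case using step by simp
    qed
  qed
  then show ?thesis using nr_props[OF assms(2)] by simp
qed

lemma V_img: "V = (\<lambda>k. d k + 1) ` RS"
proof
  show "V \<subseteq> (\<lambda>k. d k + 1) ` RS"
  proof
    fix x assume "x \<in> V"
    then obtain i where i: "i \<in> {1..n}" "x = d i + 1" by (auto simp: V_def)
    then have "x = d (nr i) + 1" using nr_eq by simp
    moreover have "nr i \<in> RS" using nr_props[of i] i by (simp add: RS_def)
    ultimately show "x \<in> (\<lambda>k. d k + 1) ` RS" by blast
  qed
next
  show "(\<lambda>k. d k + 1) ` RS \<subseteq> V" by (auto simp: V_def RS_def)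
qed

lemma inj_RS: "inj_on (\<lambda>k. d k + 1) RS"
proof (rule linorder_inj_onI')
  fix i j assume "i \<in> RS" "j \<in> RS" "i < j"
  then show "d i + 1 \<noteq> d j + 1" using Rlt[of i j] by (auto simp: RS_def)
qed

lemma V_sub: "V \<subseteq> {1..n}"
proof
  fix x assume "x \<in> V"
  then obtain i where i: "i \<in> {1..n}" "x = d i + 1" by (auto simp: V_def)
  then show "x \<in> {1..n}" using bound[of i] by auto
qed

lemma RS_L_part: "{1..n} = RS \<union> L" "RS \<inter> L = {}"
proof -
  show "{1..n} = RS \<union> L"
  proof
    show "{1..n} \<subseteq> RS \<union> L"
    proof
      fix x assume x: "x \<in> {1..n}"
      show "x \<in> RS \<union> L"
      proof (cases "Rp x")
        case True then show ?thesis using x by (simp add: RS_def)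
      next
        case False then show ?thesis using x L_iff by simp
      qed
    qed
  next
    show "RS \<union> L \<subseteq> {1..n}" by (auto simp: RS_def L_def')
  qed
  show "RS \<inter> L = {}"
  proof (rule ccontr)
    assume "RS \<inter> L \<noteq> {}"
    then obtain x where "x \<in> RS" "x \<in> L" by blast
    then show False using L_iff[of x] by (simp add: RS_def)
  qed
qed

lemma card_RS_L: "card RS + card L = n"
proof -
  have "card (RS \<union> L) = card RS + card L"
    by (rule card_Un_disjoint[OF _ _ RS_L_part(2)]) (auto simp: RS_def L_def')
  then show ?thesis using RS_L_part(1) by (metis card_atLeastAtMost diff_Suc_1)
qed

lemma card_C: "card C = card L"
proof -
  have "card V = card RS" using V_img inj_RS by (simp add: card_image)
  moreover have "card C = n - card V" using V_sub by (simp add: C_def' card_Diff_subset finite_subset)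
  ultimately show ?thesis using card_RS_L by simp
qed

lemma finC: "finite C" by (simp add: C_def')
lemma finL: "finite L" by (simp add: L_def')

lemma key:
  assumes iL: "i \<in> L"
  shows "card {l\<in>L. l \<le> i} - 1 < card C" "i < sorted_list_of_set C ! (card {l\<in>L. l \<le> i} - 1)"
proof -
  define J where "J = card {l\<in>L. l \<le> i}"
  define cR where "cR = card {k\<in>RS. k \<le> i}"
  have i1: "1 \<le> i" "i < n" using iL by (auto simp: L_def')
  have iR: "i \<notin> RS" using iL RS_L_part(2) by blast
  have "{1..i} = {k\<in>RS. k \<le> i} \<union> {l\<in>L. l \<le> i}" using RS_L_part(1) i1 by auto
  moreover have "card ({k\<in>RS. k \<le> i} \<union> {l\<in>L. l \<le> i}) = cR + J"
    unfolding cR_def J_def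
    by (rule card_Un_disjoint) (use RS_L_part(2) finL in \<open>auto simp: RS_def\<close>)
  ultimately have iJ: "i = cR + J" by (metis card_atLeastAtMost diff_Suc_1)
  have J1: "J \<ge> 1"
  proof -
    have "{l\<in>L. l \<le> i} \<noteq> {}" using iL by auto
    then show ?thesis unfolding J_def using finL by (simp add: Suc_leI card_gt_0_iff)
  qed
  have JL: "J \<le> card L" unfolding J_def using finL by (intro card_mono) auto
  show idx: "card {l\<in>L. l \<le> i} - 1 < card C" using J1 JL card_C J_def by simp
  let ?S = "insert (d i + 1) ((\<lambda>k. d k + 1) ` {k\<in>RS. k \<le> i})"
  have notin: "d i + 1 \<notin> (\<lambda>k. d k + 1) ` {k\<in>RS. k \<le> i}"
  proof
    assume "d i + 1 \<in> (\<lambda>k. d k + 1) ` {k\<in>RS. k \<le> i}"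
    then obtain k where k: "k \<in> RS" "k \<le> i" "d k = d i" by auto
    then have "k < i" using iR by (cases "k = i") auto
    then have "k < nr i" using nr_props(1)[of i] i1 by simp
    then have "d k < d (nr i)" using Rlt[of k "nr i"] k nr_props[of i] i1 by (auto simp: RS_def)
    then show False using k nr_eq[of i] i1 by simp
  qed
  have cardS: "card ?S = cR + 1"
  proof -
    have "inj_on (\<lambda>k. d k + 1) {k\<in>RS. k \<le> i}" using inj_RS by (rule inj_on_subset) auto
    then have "card ((\<lambda>k. d k + 1) ` {k\<in>RS. k \<le> i}) = cR" unfolding cR_def by (simp add: card_image)
    then show ?thesis using notin by (simp add: RS_def)
  qed
  have Ssub: "?S \<subseteq> V \<inter> {1..i}"
  proof -
    have "d i + 1 \<in> V" using i1 by (auto simp: V_def)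
    moreover have "d i + 1 \<le> i" using bound[of i] i1 by simp
    moreover have "(\<lambda>k. d k + 1) ` {k\<in>RS. k \<le> i} \<subseteq> V \<inter> {1..i}"
    proof
      fix x assume "x \<in> (\<lambda>k. d k + 1) ` {k\<in>RS. k \<le> i}"
      then obtain k where k: "k \<in> RS" "k \<le> i" "x = d k + 1" by auto
      then have "d k + 1 \<le> k" using bound[of k] by (auto simp: RS_def)
      then show "x \<in> V \<inter> {1..i}" using k V_img by auto
    qed
    ultimately show ?thesis by auto
  qed
  have cV: "card (V \<inter> {1..i}) \<ge> cR + 1"
    using card_mono[OF _ Ssub] cardS by simp
  have Ceq: "{c\<in>C. c \<le> i} = {1..i} - (V \<inter> {1..i})" using i1 by (auto simp: C_def')
  have cC: "card {c\<in>C. c \<le> i} \<le> J - 1"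
  proof -
    have "card {c\<in>C. c \<le> i} = i - card (V \<inter> {1..i})" unfolding Ceq
      by (simp add: card_Diff_subset)
    then show ?thesis using cV iJ by simp
  qed
  define x where "x = sorted_list_of_set C ! (J - 1)"
  have xC: "x \<in> C" unfolding x_def using idx J_def finC by (metis nth_mem set_sorted_list_of_set length_sorted_list_of_set)
  have cx: "card {c\<in>C. c < x} = J - 1" unfolding x_def using slos_card_less[OF finC] idx J_def by simp
  show "i < sorted_list_of_set C ! (card {l\<in>L. l \<le> i} - 1)"
  proof (rule ccontr)
    assume "\<not> ?thesis"
    then have xi: "x \<le> i" unfolding x_def J_def by simp
    have "insert x {c\<in>C. c < x} \<subseteq> {c\<in>C. c \<le> i}" using xC xi by auto
    then have "card (insert x {c\<in>C. c < x}) \<le> card {c\<in>C. c \<le> i}" using finC by (intro card_mono) auto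
    then have "J \<le> card {c\<in>C. c \<le> i}" using cx finC J1 by simp
    then show False using cC J1 by simp
  qed
qed

end

lemma distinct_ent:
  assumes "length p = n" "\<And>i j. 1 \<le> i \<Longrightarrow> i < j \<Longrightarrow> j \<le> n \<Longrightarrow> ent p i \<noteq> ent p j"
  shows "distinct p"
proof -
  have "\<forall>a<length p. \<forall>b<length p. a \<noteq> b \<longrightarrow> p ! a \<noteq> p ! b"
  proof (intro allI impI)
    fix a b assume ab: "a < length p" "b < length p" "a \<noteq> b"
    show "p ! a \<noteq> p ! b"
    proof (cases "a < b")
      case True
      then have "ent p (Suc a) \<noteq> ent p (Suc b)" using assms ab by simp
      then show ?thesis by (simp add: ent_def)
    next
      case False
      then have "b < a" using ab by simp
      then have "ent p (Suc b) \<noteq> ent p (Suc a)" using assms ab by simp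
      then show ?thesis by (simp add: ent_def)
    qed
  qed
  then show ?thesis by (simp add: distinct_conv_nth)
qed

lemma set_ent:
  assumes "length p = n" "\<And>i. 1 \<le> i \<Longrightarrow> i \<le> n \<Longrightarrow> ent p i \<in> A"
  shows "set p \<subseteq> A"
proof
  fix x assume "x \<in> set p"
  then obtain a where a: "a < length p" "p ! a = x" by (metis in_set_conv_nth)
  then have "ent p (Suc a) = x" by (simp add: ent_def)
  then show "x \<in> A" using assms(2)[of "Suc a"] a assms(1) by simp
qed

lemma perm_ent:
  assumes "length p = n" "\<And>i j. 1 \<le> i \<Longrightarrow> i < j \<Longrightarrow> j \<le> n \<Longrightarrow> ent p i \<noteq> ent p j"
    "\<And>i. 1 \<le> i \<Longrightarrow> i \<le> n \<Longrightarrow> ent p i \<in> {1..n}"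
  shows "p \<in> permutations_of_set {1..n}"
proof -
  have dp: "distinct p" using distinct_ent assms by blast
  have sub: "set p \<subseteq> {1..n}" using set_ent assms by blast
  have "card (set p) = n" using dp assms(1) by (simp add: distinct_card)
  then have "set p = {1..n}" using sub by (simp add: card_subset_eq)
  then show ?thesis using dp by (simp add: permutations_of_set_def)
qed

lemma list_eq_ent:
  assumes "length p = n" "length q = n" "\<And>i. 1 \<le> i \<Longrightarrow> i \<le> n \<Longrightarrow> ent p i = ent q i"
  shows "p = q"
proof (rule nth_equalityI)
  show "length p = length q" using assms by simp
  fix a assume "a < length p"
  then have "ent p (Suc a) = ent q (Suc a)" using assms by simp
  then show "p ! a = q ! a" by (simp add: ent_def)
qed

definition dval :: "nat list \<Rightarrow> nat \<Rightarrow> nat" where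
  "dval p i = ent p (LEAST k. i \<le> k \<and> k \<le> length p \<and> ent p k \<le> k) - 1"

context dpath begin

lemma pi_R: assumes "i \<in> {1..n}" "Rp i" shows "\<pi> i = d i + 1"
  using assms ent_psi[of i D] len by (simp add: Rp_def)

lemma pi_R_le: assumes "i \<in> {1..n}" "Rp i" shows "\<pi> i \<le> i"
proof -
  have "d i \<le> i - 1" using bound[of i] assms by simp
  moreover have "1 \<le> i" using assms by simp
  ultimately show ?thesis using pi_R[OF assms] by simp
qed

lemma pi_L_eq: assumes "i \<in> L" shows "\<pi> i = sorted_list_of_set C ! (card {l\<in>L. l \<le> i} - 1)"
proof -
  have "i \<in> {1..<n}" "d i = d (Suc i)" using assms by (auto simp: L_def')
  then show ?thesis using ent_psi[of i D] len by simp
qed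

lemma pi_L_gt: "i \<in> L \<Longrightarrow> i < \<pi> i"
  using pi_L_eq key(2) by simp

lemma pi_L_C: "i \<in> L \<Longrightarrow> \<pi> i \<in> C"
  using pi_L_eq key(1) finC by (metis nth_mem set_sorted_list_of_set length_sorted_list_of_set)

lemma pi_le_iff: assumes "i \<in> {1..n}" shows "\<pi> i \<le> i \<longleftrightarrow> Rp i"
proof (cases "Rp i")
  case True then show ?thesis using pi_R_le assms by simp
next
  case False
  then have "i \<in> L" using L_iff assms by simp
  then show ?thesis using pi_L_gt False by fastforce
qed

lemma incR: assumes "i \<in> {1..n}" "j \<in> {1..n}" "Rp i" "Rp j" "i < j" shows "\<pi> i < \<pi> j"
  using pi_R assms Rlt[of i j] by simp

lemma incL: assumes "i \<in> L" "j \<in> L" "i < j" shows "\<pi> i < \<pi> j"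
proof -
  have sub: "{l\<in>L. l \<le> i} \<subset> {l\<in>L. l \<le> j}"
  proof
    show "{l\<in>L. l \<le> i} \<subseteq> {l\<in>L. l \<le> j}" using assms by auto
    have "j \<in> {l\<in>L. l \<le> j}" "j \<notin> {l\<in>L. l \<le> i}" using assms by auto
    then show "{l\<in>L. l \<le> i} \<noteq> {l\<in>L. l \<le> j}" by blast
  qed
  then have lt: "card {l\<in>L. l \<le> i} < card {l\<in>L. l \<le> j}" using finL by (intro psubset_card_mono) auto
  have pos: "card {l\<in>L. l \<le> i} \<ge> 1"
  proof -
    have "i \<in> {l\<in>L. l \<le> i}" using assms(1) by simp
    then have "{l\<in>L. l \<le> i} \<noteq> {}" by blast
    moreover have "finite {l\<in>L. l \<le> i}" using finL by simp
    ultimately show ?thesis by (simp add: Suc_leI card_gt_0_iff)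
  qed
  have "card {l\<in>L. l \<le> j} - 1 < length (sorted_list_of_set C)" using key(1)[OF assms(2)] by simp
  moreover have "card {l\<in>L. l \<le> i} - 1 < card {l\<in>L. l \<le> j} - 1" using lt pos by simp
  ultimately have "sorted_list_of_set C ! (card {l\<in>L. l \<le> i} - 1) < sorted_list_of_set C ! (card {l\<in>L. l \<le> j} - 1)"
    using sorted_wrt_nth_less[OF strict_sorted_list_of_set] by blast
  then show ?thesis using pi_L_eq assms by simp
qed

lemma inc_same: assumes "i \<in> {1..n}" "j \<in> {1..n}" "i < j" "Rp i = Rp j" shows "\<pi> i < \<pi> j"
proof (cases "Rp i")
  case True then show ?thesis using incR assms by simp
next
  case False
  then have "i \<in> L" "j \<in> L" using assms L_iff by auto
  then show ?thesis using incL assms by simp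
qed

lemma pi_range: assumes "i \<in> {1..n}" shows "\<pi> i \<in> {1..n}"
proof (cases "Rp i")
  case True
  then have "\<pi> i \<in> V" using pi_R assms by (auto simp: V_def)
  then show ?thesis using V_sub by auto
next
  case False
  then have "i \<in> L" using L_iff assms by simp
  then show ?thesis using pi_L_C by (auto simp: C_def')
qed

lemma pi_inj: assumes "i \<in> {1..n}" "j \<in> {1..n}" "i < j" shows "\<pi> i \<noteq> \<pi> j"
proof (cases "Rp i = Rp j")
  case True then show ?thesis using inc_same assms by (metis less_irrefl)
next
  case False
  have VC: "\<And>a b. a \<in> {1..n} \<Longrightarrow> b \<in> {1..n} \<Longrightarrow> Rp a \<Longrightarrow> \<not> Rp b \<Longrightarrow> \<pi> a \<noteq> \<pi> b"
  proof -
    fix a b assume ab: "a \<in> {1..n}" "b \<in> {1..n}" "Rp a" "\<not> Rp b"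
    have "\<pi> a \<in> V" using pi_R ab by (auto simp: V_def)
    moreover have "\<pi> b \<in> C" using pi_L_C L_iff ab by simp
    ultimately show "\<pi> a \<noteq> \<pi> b" by (auto simp: C_def')
  qed
  show ?thesis
  proof (cases "Rp i")
    case True then show ?thesis using VC assms False by simp
  next
    case F: False then show ?thesis using VC[of j i] assms False by auto
  qed
qed

lemma psi_av: "psi D \<in> av321 n"
proof -
  have perm: "psi D \<in> permutations_of_set {1..n}"
    by (rule perm_ent[of _ n]) (use len pi_inj pi_range in auto)
  have no: "\<not> (\<exists>i j l. 1 \<le> i \<and> i < j \<and> j < l \<and> l \<le> n \<and> \<pi> i > \<pi> j \<and> \<pi> j > \<pi> l)"
  proof
    assume "\<exists>i j l. 1 \<le> i \<and> i < j \<and> j < l \<and> l \<le> n \<and> \<pi> i > \<pi> j \<and> \<pi> j > \<pi> l"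
    then obtain i j l where h: "1 \<le> i" "i < j" "j < l" "l \<le> n" "\<pi> i > \<pi> j" "\<pi> j > \<pi> l" by blast
    have r: "i \<in> {1..n}" "j \<in> {1..n}" "l \<in> {1..n}" using h by auto
    show False
    proof (cases "Rp i = Rp j")
      case True then show ?thesis using inc_same[of i j] r h by simp
    next
      case F1: False
      show ?thesis
      proof (cases "Rp j = Rp l")
        case True then show ?thesis using inc_same[of j l] r h by simp
      next
        case False
        then have "Rp i = Rp l" using F1 by auto
        then show ?thesis using inc_same[of i l] r h by simp
      qed
    qed
  qed
  show ?thesis using perm no by (simp add: av321_def)
qed

lemma d_dval: assumes "i \<in> {1..n}" shows "d i = dval (psi D) i"
proof -
  have "(\<lambda>k. i \<le> k \<and> k \<le> length (psi D) \<and> \<pi> k \<le> k) = (\<lambda>k. i \<le> k \<and> k \<le> n \<and> Rp k)"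
  proof (rule ext)
    fix k
    show "(i \<le> k \<and> k \<le> length (psi D) \<and> \<pi> k \<le> k) = (i \<le> k \<and> k \<le> n \<and> Rp k)"
      using pi_le_iff[of k] assms len by auto
  qed
  then have "(LEAST k. i \<le> k \<and> k \<le> length (psi D) \<and> \<pi> k \<le> k) = nr i" by (simp add: nr_def)
  then have "dval (psi D) i = \<pi> (nr i) - 1" by (simp add: dval_def)
  also have "\<dots> = d (nr i)" using pi_R[of "nr i"] nr_props[of i] assms by simp
  also have "\<dots> = d i" using nr_eq assms by simp
  finally show ?thesis by simp
qed

end

lemma psi_inj: "inj_on psi (dyck n)"
proof (rule inj_onI)
  fix D1 D2 assume h: "D1 \<in> dyck n" "D2 \<in> dyck n" "psi D1 = psi D2"
  interpret a: dpath n D1 using h by unfold_locales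
  interpret b: dpath n D2 using h by unfold_locales
  show "D1 = D2"
    by (rule list_eq_ent[of _ n]) (use a.len b.len a.d_dval b.d_dval h in auto)
qed


context dpath begin

lemma hill_fix: "hill D = fixp (psi D)"
proof -
  have "{i\<in>{1..n}. d i = i - 1 \<and> ((i < n \<and> d i < d (Suc i)) \<or> (i = n \<and> d i < n))}
        = {i\<in>{1..n}. \<pi> i = i}"
  proof (rule Collect_cong)
    fix i
    show "(i \<in> {1..n} \<and> d i = i - 1 \<and> ((i < n \<and> d i < d (Suc i)) \<or> (i = n \<and> d i < n))) =
          (i \<in> {1..n} \<and> \<pi> i = i)"
    proof (cases "i \<in> {1..n}")
      case False then show ?thesis by auto
    next
      case i: True
      show ?thesis
      proof (cases "Rp i")
        case True
        have "(i < n \<and> d i < d (Suc i)) \<or> (i = n \<and> d i < n)"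
        proof (cases "i = n")
          case True then show ?thesis using bound[of i] i by auto
        next
          case False then show ?thesis using Rp_lt[of i] i \<open>Rp i\<close> by auto
        qed
        moreover have "\<pi> i = d i + 1" using pi_R i True by simp
        ultimately show ?thesis using i by auto
      next
        case False
        then have "i \<in> L" using L_iff i by simp
        then have "i < n" "d i = d (Suc i)" "i < \<pi> i" using pi_L_gt by (auto simp: L_def')
        then show ?thesis by auto
      qed
    qed
  qed
  then show ?thesis by (simp add: hill_def fixp_def len Let_def)
qed

lemma L_sub: "L \<subseteq> {1..<n}" by (auto simp: L_def')

lemma seg_set: "{i\<in>{1..<n}. d i = d (Suc i) \<and> (i = 1 \<or> d (i - 1) \<noteq> d i)} = {i\<in>L. i - 1 \<notin> L}"
proof (rule set_eqI)
  fix i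
  show "i \<in> {i\<in>{1..<n}. d i = d (Suc i) \<and> (i = 1 \<or> d (i - 1) \<noteq> d i)} \<longleftrightarrow> i \<in> {i\<in>L. i - 1 \<notin> L}"
  proof (cases "i \<in> L")
    case False then show ?thesis by (auto simp: L_def')
  next
    case True
    then have i: "i \<in> {1..<n}" "d i = d (Suc i)" by (auto simp: L_def')
    show ?thesis
    proof (cases "i = 1")
      case True
      then have "i - 1 \<notin> L" using L_sub by auto
      then show ?thesis using i True \<open>i \<in> L\<close> by auto
    next
      case False
      then have i2: "i - 1 \<in> {1..<n}" "Suc (i - 1) = i" using i by auto
      have "(i - 1 \<in> L) = (d (i - 1) = d (Suc (i - 1)))" using i2(1) by (simp add: L_def')
      then have "(i - 1 \<in> L) = (d (i - 1) = d i)" using i2(2) by simp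
      then show ?thesis using i False \<open>i \<in> L\<close> by auto
    qed
  qed
qed

lemma des_iff: assumes "i \<in> {1..<n}" shows "\<pi> (Suc i) < \<pi> i \<longleftrightarrow> i \<in> L \<and> Suc i \<notin> L"
proof -
  have i1: "i \<in> {1..n}" "Suc i \<in> {1..n}" using assms by auto
  show ?thesis
  proof (cases "i \<in> L")
    case iL: True
    show ?thesis
    proof (cases "Suc i \<in> L")
      case True then show ?thesis using incL[of i "Suc i"] iL by auto
    next
      case False
      then have R: "Rp (Suc i)" using L_iff i1 by simp
      have "d i = d (Suc i)" using iL by (simp add: L_def')
      then have "\<pi> (Suc i) = d i + 1" using pi_R[OF i1(2) R] by simp
      moreover have "d i + 1 \<le> i" using bound[of i] assms by auto
      moreover have "i < \<pi> i" using pi_L_gt iL by simp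
      ultimately show ?thesis using iL False by simp
    qed
  next
    case False
    then have R: "Rp i" using L_iff i1 by simp
    then have le: "\<pi> i \<le> i" using pi_R_le i1 by simp
    show ?thesis
    proof (cases "Rp (Suc i)")
      case True then show ?thesis using incR[of i "Suc i"] i1 R False by auto
    next
      case F2: False
      then have "Suc i \<in> L" using L_iff i1 by simp
      then have "Suc i < \<pi> (Suc i)" using pi_L_gt by simp
      then show ?thesis using le False by simp
    qed
  qed
qed

lemma des_set: "{i\<in>{1..<n}. \<pi> i > \<pi> (Suc i)} = {i\<in>L. Suc i \<notin> L}"
  using des_iff L_sub by auto

lemma seg_des: "seg D = des (psi D)"
proof -
  have "seg D = card {i\<in>L. i - 1 \<notin> L}" using seg_set by (simp add: seg_def len Let_def)
  also have "\<dots> = card {i\<in>L. Suc i \<notin> L}"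
  proof -
    have "0 \<notin> L" using L_sub by auto
    then show ?thesis using runs_count[OF finL] by simp
  qed
  also have "\<dots> = des (psi D)" using des_set by (simp add: des_def len)
  finally show ?thesis .
qed

lemma E_set: "{i\<in>{2..n}. d (i - 1) = d i \<and> (i = n \<or> d i \<noteq> d (Suc i))} = Suc ` {i\<in>L. Suc i \<notin> L}"
proof (rule set_eqI)
  fix x
  show "x \<in> {i\<in>{2..n}. d (i - 1) = d i \<and> (i = n \<or> d i \<noteq> d (Suc i))} \<longleftrightarrow> x \<in> Suc ` {i\<in>L. Suc i \<notin> L}"
  proof (cases "x \<in> {2..n}")
    case False
    then show ?thesis using L_sub by auto
  next
    case True
    then have x: "x - 1 \<in> {1..<n}" "Suc (x - 1) = x" "x \<in> {1..n}" by auto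
    have "(x - 1 \<in> L) = (d (x - 1) = d (Suc (x - 1)))" using x(1) by (simp add: L_def')
    then have a: "(x - 1 \<in> L) = (d (x - 1) = d x)" using x(2) by simp
    have b: "(x \<notin> L) = (x = n \<or> d x \<noteq> d (Suc x))" using L_iff[OF x(3)] by (simp add: Rp_def)
    have "x \<in> Suc ` {i\<in>L. Suc i \<notin> L} \<longleftrightarrow> x - 1 \<in> L \<and> x \<notin> L"
    proof
      assume "x \<in> Suc ` {i\<in>L. Suc i \<notin> L}"
      then obtain i where "i \<in> L" "Suc i \<notin> L" "x = Suc i" by auto
      then show "x - 1 \<in> L \<and> x \<notin> L" by simp
    next
      assume "x - 1 \<in> L \<and> x \<notin> L"
      then show "x \<in> Suc ` {i\<in>L. Suc i \<notin> L}" using x(2) by (metis (no_types, lifting) image_eqI mem_Collect_eq)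
    qed
    then show ?thesis using a b True by auto
  qed
qed

lemma lseg_ldes: "lseg D = ldes (psi D) + 1"
proof (cases "n = 0")
  case True
  then have "D = []" using len by auto
  then have "psi D = []" by (simp add: psi_def)
  then show ?thesis using \<open>D = []\<close> by (simp add: lseg_def ldes_def)
next
  case n0: False
  let ?Ds = "{i\<in>L. Suc i \<notin> L}"
  have ne: "psi D \<noteq> []" using n0 len by (metis length_psi list.size(3))
  have lseg_eq: "lseg D = (if Suc ` ?Ds = {} then n + 1 else Min (Suc ` ?Ds))"
    unfolding lseg_def Let_def len E_set by (rule refl)
  have ldes_eq: "ldes (psi D) = (LEAST i. 1 \<le> i \<and> ((i < n \<and> \<pi> i > \<pi> (Suc i)) \<or> i = n))"
    using ne len by (simp add: ldes_def)
  have P: "\<And>i. (1 \<le> i \<and> ((i < n \<and> \<pi> i > \<pi> (Suc i)) \<or> i = n)) \<longleftrightarrow> (i \<in> ?Ds \<or> i = n)"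
    using des_iff L_sub n0 by auto
  show ?thesis
  proof (cases "?Ds = {}")
    case True
    have "(LEAST i. 1 \<le> i \<and> ((i < n \<and> \<pi> i > \<pi> (Suc i)) \<or> i = n)) = n"
      by (rule Least_equality) (use P True in auto)
    then show ?thesis using lseg_eq ldes_eq True by simp
  next
    case False
    have fin: "finite ?Ds" using finL by simp
    define m where "m = Min ?Ds"
    have mD: "m \<in> ?Ds" unfolding m_def using fin False by (rule Min_in)
    have mn: "m < n" using mD L_sub by auto
    have "(LEAST i. 1 \<le> i \<and> ((i < n \<and> \<pi> i > \<pi> (Suc i)) \<or> i = n)) = m"
    proof (rule Least_equality)
      show "1 \<le> m \<and> ((m < n \<and> \<pi> m > \<pi> (Suc m)) \<or> m = n)" using P mD by blast
      fix y assume "1 \<le> y \<and> ((y < n \<and> \<pi> y > \<pi> (Suc y)) \<or> y = n)"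
      then have "y \<in> ?Ds \<or> y = n" using P by blast
      then show "m \<le> y" using mn fin unfolding m_def by auto
    qed
    moreover have "Min (Suc ` ?Ds) = Suc m"
      unfolding m_def using mono_Min_commute[of Suc ?Ds] fin False by (simp add: mono_def)
    moreover have "Suc ` ?Ds \<noteq> {}" using False by blast
    ultimately show ?thesis using lseg_eq ldes_eq by presburger
  qed
qed

end

definition phi :: "nat list \<Rightarrow> nat list" where
  "phi p = map (dval p) [1..<length p + 1]"

lemma ent_map_upt:
  assumes "1 \<le> i" "i \<le> m"
  shows "ent (map f [1..<m + 1]) i = f i"
proof -
  have "i - 1 < length [1..<m + 1]" using assms by simp
  moreover have "[1..<m + 1] ! (i - 1) = 1 + (i - 1)" by (rule nth_upt) (use assms in simp)
  ultimately show ?thesis using assms by (simp add: ent_def del: upt_Suc)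
qed

locale avp =
  fixes n :: nat and p :: "nat list"
  assumes P: "p \<in> av321 n"
begin

abbreviation "e \<equiv> ent p"

lemma lenp: "length p = n" and distp: "distinct p" and setp: "set p = {1..n}"
proof -
  have "set p = {1..n}" "distinct p" using P by (auto simp: av321_def permutations_of_set_def)
  moreover then have "length p = n" using distinct_card by fastforce
  ultimately show "length p = n" "distinct p" "set p = {1..n}" by auto
qed

lemma no321: "\<not> (1 \<le> i \<and> i < j \<and> j < l \<and> l \<le> n \<and> e i > e j \<and> e j > e l)"
  using P by (auto simp: av321_def)

lemma e_range: assumes "i \<in> {1..n}" shows "e i \<in> {1..n}"
proof -
  have "p ! (i - 1) \<in> set p" using assms lenp by auto
  then show ?thesis using setp by (simp add: ent_def)
qed

lemma e_inj: assumes "i \<in> {1..n}" "j \<in> {1..n}" "e i = e j" shows "i = j"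
proof -
  have "p ! (i - 1) = p ! (j - 1)" using assms by (simp add: ent_def)
  then have "i - 1 = j - 1" using distp lenp assms nth_eq_iff_index_eq by fastforce
  moreover have "1 \<le> i" "1 \<le> j" using assms by auto
  ultimately show ?thesis by linarith
qed

lemma e_surj: assumes "v \<in> {1..n}" shows "\<exists>i\<in>{1..n}. e i = v"
proof -
  have "v \<in> set p" using setp assms by simp
  then obtain a where "a < length p" "p ! a = v" by (metis in_set_conv_nth)
  then show ?thesis using lenp by (intro bexI[of _ "Suc a"]) (auto simp: ent_def)
qed

lemma G1: assumes "i \<in> {1..n}" shows "\<exists>m. i \<le> m \<and> m \<le> n \<and> e m \<le> i"
proof (rule ccontr)
  assume "\<not> ?thesis"
  then have big: "\<And>m. i \<le> m \<Longrightarrow> m \<le> n \<Longrightarrow> e m > i" by force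
  have "{1..i} \<subseteq> e ` {1..i - 1}"
  proof
    fix v assume v: "v \<in> {1..i}"
    then obtain q where q: "q \<in> {1..n}" "e q = v" using e_surj assms by force
    have "q < i" using big[of q] q v by force
    then show "v \<in> e ` {1..i - 1}" using q by force
  qed
  then have "card {1..i} \<le> card (e ` {1..i - 1})" by (intro card_mono) auto
  also have "\<dots> \<le> card {1..i - 1}" by (rule card_image_le) simp
  finally have "card {1..i} \<le> card {1..i - 1}" .
  moreover have "1 \<le> i" using assms by simp
  ultimately show False by simp
qed

lemma incDef: assumes "i \<in> {1..n}" "j \<in> {1..n}" "i < j" "e i \<le> i" "e j \<le> j" shows "e i < e j"
proof (rule ccontr)
  assume "\<not> ?thesis"
  then have "e j \<le> e i" by simp
  moreover have "e j \<noteq> e i" using e_inj[of j i] assms by auto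
  ultimately have ji: "e j < e i" by simp
  have "\<exists>q\<in>{1..i}. e q > i"
  proof (rule ccontr)
    assume "\<not> ?thesis"
    then have small: "\<And>q. q \<in> {1..i} \<Longrightarrow> e q \<le> i" by force
    have "e ` {1..i} \<subseteq> {1..i} - {e j}"
    proof
      fix v assume "v \<in> e ` {1..i}"
      then obtain q where q: "q \<in> {1..i}" "v = e q" by auto
      have "v \<in> {1..n}" using e_range q assms by auto
      moreover have "v \<le> i" using small q by simp
      moreover have "v \<noteq> e j" using e_inj[of q j] q assms by auto
      ultimately show "v \<in> {1..i} - {e j}" by auto
    qed
    moreover have "inj_on e {1..i}" using e_inj assms by (intro inj_onI) auto
    ultimately have "card {1..i} \<le> card ({1..i} - {e j})"
      by (metis card_image card_mono finite_Diff finite_atLeastAtMost)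
    moreover have "e j \<in> {1..i}" using e_range assms ji by auto
    moreover from this have "card ({1..i} - {e j}) = i - 1" by simp
    moreover have "1 \<le> i" using assms by simp
    moreover have "card {1..i} = i" by simp
    ultimately show False by linarith
  qed
  then obtain q where q: "q \<in> {1..i}" "e q > i" by blast
  then have "q < i" using assms(4) by (cases "q = i") auto
  then show False using no321[of q i j] q assms ji by auto
qed

lemma incExc: assumes "i \<in> {1..n}" "j \<in> {1..n}" "i < j" "e i > i" "e j > j" shows "e i < e j"
proof (rule ccontr)
  assume "\<not> ?thesis"
  then have "e j \<le> e i" by simp
  moreover have "e j \<noteq> e i" using e_inj[of j i] assms by auto
  ultimately have ji: "e j < e i" by simp
  obtain m where m: "j \<le> m" "m \<le> n" "e m \<le> j" using G1 assms by blast
  have "m \<noteq> j" using m assms by auto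
  then show False using no321[of i j m] m assms ji by auto
qed

lemma F3: assumes "1 \<le> i" "i \<le> k" "k \<le> n" "e k \<le> k" "\<And>m. i \<le> m \<Longrightarrow> m < k \<Longrightarrow> e m > m"
  shows "e k \<le> i"
proof (rule ccontr)
  assume c: "\<not> ?thesis"
  then have ik: "i < k" using assms by (cases "i = k") auto
  obtain m where m: "i \<le> m" "m \<le> n" "e m \<le> i" using G1 assms by force
  have "\<not> m < k" using assms(5)[of m] m by auto
  moreover have "m \<noteq> k" using m c by auto
  ultimately have mk: "k < m" by simp
  have "e (k - 1) > k - 1" using assms(5)[of "k - 1"] ik by simp
  moreover have "e (k - 1) \<noteq> e k" using e_inj[of "k - 1" k] ik assms by force
  ultimately have "e (k - 1) > e k" using assms(4) ik by simp
  then show False using no321[of "k - 1" k m] ik assms mk m c by auto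
qed

definition kk :: "nat \<Rightarrow> nat" where "kk i = (LEAST k. i \<le> k \<and> k \<le> n \<and> e k \<le> k)"

lemma kk_props:
  assumes "1 \<le> i" "i \<le> n"
  shows "i \<le> kk i" "kk i \<le> n" "e (kk i) \<le> kk i" "\<And>m. i \<le> m \<Longrightarrow> m < kk i \<Longrightarrow> e m > m"
proof -
  have ex: "i \<le> n \<and> n \<le> n \<and> e n \<le> n" using e_range[of n] assms by auto
  have "i \<le> kk i \<and> kk i \<le> n \<and> e (kk i) \<le> kk i" unfolding kk_def by (rule LeastI[of _ n], rule ex)
  then show "i \<le> kk i" "kk i \<le> n" "e (kk i) \<le> kk i" by auto
  fix m assume m: "i \<le> m" "m < kk i"
  show "e m > m"
  proof (rule ccontr)
    assume "\<not> e m > m"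
    then have "kk i \<le> m" unfolding kk_def using m \<open>kk i \<le> n\<close>
      by (intro Least_le) simp
    then show False using m by simp
  qed
qed

lemma kk_self: "i \<le> n \<Longrightarrow> e i \<le> i \<Longrightarrow> kk i = i"
  unfolding kk_def by (rule Least_equality) auto

lemma kk_next: assumes "i < n" "e i > i" shows "kk i = kk (Suc i)"
proof -
  have "(\<lambda>k. i \<le> k \<and> k \<le> n \<and> e k \<le> k) = (\<lambda>k. Suc i \<le> k \<and> k \<le> n \<and> e k \<le> k)"
  proof (rule ext)
    fix k show "(i \<le> k \<and> k \<le> n \<and> e k \<le> k) = (Suc i \<le> k \<and> k \<le> n \<and> e k \<le> k)"
      using assms by (cases "k = i") auto
  qed
  then show ?thesis by (simp add: kk_def)
qed

abbreviation "q \<equiv> phi p"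
abbreviation "dq \<equiv> ent (phi p)"

lemma len_q: "length q = n" using lenp by (simp add: phi_def del: upt_Suc)

lemma dq_eq: assumes "i \<in> {1..n}" shows "dq i = e (kk i) - 1"
proof -
  have "dq i = dval p i" unfolding phi_def using ent_map_upt[of i "length p" "dval p"] assms lenp by simp
  then show ?thesis by (simp add: dval_def kk_def lenp)
qed

lemma e_pos: "i \<in> {1..n} \<Longrightarrow> e i \<ge> 1" using e_range by auto

lemma kk_range: "i \<in> {1..n} \<Longrightarrow> kk i \<in> {1..n}" using kk_props[of i] by auto

lemma q_dyck: "q \<in> dyck n"
proof -
  have st: "dq i \<le> dq (Suc i)" if i: "1 \<le> i" "i < n" for i
  proof (cases "e i \<le> i")
    case True
    then have k: "kk i = i" using kk_self i by simp
    have k2: "Suc i \<le> kk (Suc i)" "kk (Suc i) \<le> n" "e (kk (Suc i)) \<le> kk (Suc i)" using kk_props[of "Suc i"] i by auto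
    have "e i < e (kk (Suc i))" using incDef[of i "kk (Suc i)"] i k2 True by auto
    then show ?thesis using dq_eq[of i] dq_eq[of "Suc i"] i k by simp
  next
    case False
    then have "kk i = kk (Suc i)" using kk_next i by simp
    then show ?thesis using dq_eq[of i] dq_eq[of "Suc i"] i by simp
  qed
  have bd: "dq i \<le> i - 1" if i: "i \<in> {1..n}" for i
  proof -
    have "e (kk i) \<le> i" using F3[of i "kk i"] kk_props[of i] i by auto
    then show ?thesis using dq_eq i by simp
  qed
  show ?thesis using st bd len_q by (simp add: dyck_def)
qed

definition Exc where "Exc = {l\<in>{1..n}. e l > l}"

lemma eq_iff: assumes "l \<in> {1..<n}" shows "dq l = dq (Suc l) \<longleftrightarrow> e l > l"
proof (cases "e l > l")
  case True
  then have "kk l = kk (Suc l)" using kk_next assms by simp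
  then show ?thesis using dq_eq[of l] dq_eq[of "Suc l"] assms True by simp
next
  case False
  then have k: "kk l = l" using kk_self assms by simp
  have "Suc l \<le> kk (Suc l)" "kk (Suc l) \<in> {1..n}" using kk_props[of "Suc l"] kk_range[of "Suc l"] assms by auto
  then have "e l \<noteq> e (kk (Suc l))" using e_inj[of l "kk (Suc l)"] assms by force
  moreover have "e l \<ge> 1" "e (kk (Suc l)) \<ge> 1" using e_pos assms \<open>kk (Suc l) \<in> {1..n}\<close> by auto
  ultimately have "dq l \<noteq> dq (Suc l)" using dq_eq[of l] dq_eq[of "Suc l"] assms k by auto
  then show ?thesis using False by simp
qed

lemma Exc_sub: "Exc \<subseteq> {1..<n}"
proof
  fix l assume l: "l \<in> Exc"
  have "l \<noteq> n"
  proof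
    assume "l = n"
    then show False using l e_range[of n] by (auto simp: Exc_def)
  qed
  then show "l \<in> {1..<n}" using l by (auto simp: Exc_def)
qed

lemma Lq: "Lset q = Exc"
proof (rule set_eqI)
  fix l
  show "l \<in> Lset q \<longleftrightarrow> l \<in> Exc"
  proof (cases "l \<in> {1..<n}")
    case True then show ?thesis using eq_iff[OF True] by (auto simp: Lset_def len_q Exc_def)
  next
    case False then show ?thesis using Exc_sub by (auto simp: Lset_def len_q)
  qed
qed

lemma Cq: "Cset q = e ` Exc"
proof -
  have V: "{dq i + 1 | i. i \<in> {1..n}} = e ` {k\<in>{1..n}. e k \<le> k}"
  proof (rule set_eqI, rule iffI)
    fix v assume "v \<in> {dq i + 1 | i. i \<in> {1..n}}"
    then obtain i where i: "i \<in> {1..n}" "v = dq i + 1" by auto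
    then have "v = e (kk i)" using dq_eq e_pos[of "kk i"] kk_range by simp
    moreover have "kk i \<in> {k\<in>{1..n}. e k \<le> k}" using kk_range kk_props i by auto
    ultimately show "v \<in> e ` {k\<in>{1..n}. e k \<le> k}" by blast
  next
    fix v assume "v \<in> e ` {k\<in>{1..n}. e k \<le> k}"
    then obtain k where k: "k \<in> {1..n}" "e k \<le> k" "v = e k" by auto
    then have "dq k + 1 = v" using dq_eq[of k] kk_self[of k] e_pos[of k] by simp
    then show "v \<in> {dq i + 1 | i. i \<in> {1..n}}" using k by blast
  qed
  have "{1..n} - e ` {k\<in>{1..n}. e k \<le> k} = e ` Exc"
  proof (rule set_eqI, rule iffI)
    fix v assume v: "v \<in> {1..n} - e ` {k\<in>{1..n}. e k \<le> k}"
    then obtain i where i: "i \<in> {1..n}" "e i = v" using e_surj by force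
    then have "i \<in> Exc" using v by (auto simp: Exc_def)
    then show "v \<in> e ` Exc" using i by blast
  next
    fix v assume "v \<in> e ` Exc"
    then obtain i where i: "i \<in> Exc" "v = e i" by auto
    have "v \<in> {1..n}" using e_range i by (auto simp: Exc_def)
    moreover have "v \<notin> e ` {k\<in>{1..n}. e k \<le> k}"
    proof
      assume "v \<in> e ` {k\<in>{1..n}. e k \<le> k}"
      then obtain k where "k \<in> {1..n}" "e k \<le> k" "e k = v" by auto
      then show False using e_inj[of k i] i by (auto simp: Exc_def)
    qed
    ultimately show "v \<in> {1..n} - e ` {k\<in>{1..n}. e k \<le> k}" by blast
  qed
  then show ?thesis using V by (simp add: Cset_def len_q)
qed

lemma psi_q: "psi q = p"
proof (rule list_eq_ent[of _ n])
  show "length (psi q) = n" using len_q by simp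
  show "length p = n" by (rule lenp)
  fix i assume i: "1 \<le> i" "i \<le> n"
  show "ent (psi q) i = e i"
  proof (cases "e i \<le> i")
    case True
    then have k: "kk i = i" using kk_self i by simp
    have cond: "i = length q \<or> dq i \<noteq> dq (Suc i)"
    proof (cases "i = n")
      case True then show ?thesis using len_q by simp
    next
      case False then show ?thesis using eq_iff[of i] i True by simp
    qed
    have "dq i + 1 = e i" using dq_eq[of i] k e_pos[of i] i by simp
    then show ?thesis using ent_psi[of i q] i len_q cond by simp
  next
    case False
    have "i \<noteq> n" using False e_range[of n] i by auto
    then have iL: "i \<in> {1..<n}" using i by simp
    then have eqi: "dq i = dq (Suc i)" using eq_iff False by simp
    have "ent (psi q) i = sorted_list_of_set (Cset q) ! (card {l\<in>Lset q. l \<le> i} - 1)"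
      using ent_psi[of i q] i len_q eqi \<open>i \<noteq> n\<close> by simp
    also have "\<dots> = sorted_list_of_set (e ` Exc) ! (card {l\<in>Exc. l \<le> i} - 1)" using Lq Cq by simp
    also have "\<dots> = e i"
      by (rule slos_mono_image) (use incExc False i in \<open>auto simp: Exc_def\<close>)
    finally show ?thesis .
  qed
qed

end

lemma psi_surj: "av321 n \<subseteq> psi ` dyck n"
proof
  fix p assume "p \<in> av321 n"
  then interpret avp n p by unfold_locales
  show "p \<in> psi ` dyck n" using q_dyck psi_q by (intro image_eqI[of _ psi "phi p"]) auto
qed

theorem lemma4p4:
  fixes n :: nat
  shows "bij_betw psi (dyck n) (av321 n) \<and>
    (\<forall>D\<in>dyck n. hill D = fixp (psi D) \<and> seg D = des (psi D) \<and> lseg D = ldes (psi D) + 1)"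
proof (intro conjI ballI)
  have "psi ` dyck n \<subseteq> av321 n"
  proof
    fix x assume "x \<in> psi ` dyck n"
    then obtain D where "D \<in> dyck n" "x = psi D" by auto
    then interpret dpath n D by unfold_locales
    show "x \<in> av321 n" using psi_av \<open>x = psi D\<close> by simp
  qed
  then have "psi ` dyck n = av321 n" using psi_surj[of n] by (rule equalityI)
  then show "bij_betw psi (dyck n) (av321 n)"
    using psi_inj[of n] by (simp add: bij_betw_def)
next
  fix D assume "D \<in> dyck n"
  then interpret dpath n D by unfold_locales
  show "hill D = fixp (psi D)" by (rule hill_fix)
  show "seg D = des (psi D)" by (rule seg_des)
  show "lseg D = ldes (psi D) + 1" by (rule lseg_ldes)
qed

end
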